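(* For each $\lambda\in\mathbb R$ let $\mathfrak M=\mathfrak M_\lambda$ be a self-adjoint linear operator on the Hilbert space $\mathbb C^{r\times m}$ (Frobenius inner product), measurable in $\lambda$, with $\sup_{\lambda\in\mathbb R}\|\mathfrak M_\lambda\|<\infty$ and not depending on $(\mathcal A,\mathcal B,\mathcal C)$. For $\mathcal A\in\mathbb R^{N\times N}$ Hurwitz, $\mathcal B\in\mathbb R^{N\times m}$, $\mathcal C\in\mathbb R^{r\times N}$, define $$V:=\frac1{4\pi}\int_{\mathbb R}\langle F(i\lambda),\mathfrak M_\lambda(F(i\lambda))\rangle\,d\lambda .$$ Then $V$ is Fréchet differentiable with respect to $\Gamma=\begin{bmatrix}\mathcal A&\mathcal B\\ \mathcal C&0\end{bmatrix}$ (ranging over real matrices with zero bottom-right $r\times m$ block, Frobenius inner product), and $$\partial_\Gamma V=\begin{bmatrix}\partial_{\mathcal A}V&\partial_{\mathcal B}V\\ \partial_{\mathcal C}V&0\end{bmatrix}=\frac1{2\pi}\int_{\mathbb R}\mathrm{Re}\,\mathfrak P\Big(\begin{bmatrix}G(i\lambda)^*\mathcal C^T\\ I_r\end{bmatrix}\mathfrak M_\lambda(F(i\lambda))\begin{bmatrix}\mathcal B^TG(i\lambda)^*&I_m\end{bmatrix}\Big)d\lambda .$$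
   Context: $G(s):=(sI_N-\mathcal A)^{-1}$, $F(s):=\mathcal CG(s)\mathcal B$; $\langle\alpha,\beta\rangle=\mathrm{Tr}(\alpha^*\beta)$ with $(\cdot)^*$ the conjugate transpose; $\mathfrak P$ replaces the bottom-right $r\times m$ block of an $(N+r)\times(N+m)$ matrix by zero. In the paper $\mathcal A,\mathcal B,\mathcal C$ are the closed-loop matrices of a plant with a stabilizing coherent quantum controller, and $V$ is a weighted coherent quantum LQG cost. *)

theory Defs
  imports "HOL-Analysis.Analysis"
begin



definition cmat :: "real^'n^'m \<Rightarrow> complex^'n^'m" where
  "cmat X = (\<chi> i j. complex_of_real (X $ i $ j))"

definition adj :: "complex^'n^'m \<Rightarrow> complex^'m^'n" where
  "adj X = (\<chi> i j. cnj (X $ j $ i))"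

definition remat :: "complex^'n^'m \<Rightarrow> real^'n^'m" where
  "remat X = (\<chi> i j. Re (X $ i $ j))"

definition cscale :: "complex \<Rightarrow> complex^'n^'m \<Rightarrow> complex^'n^'m" where
  "cscale c X = (\<chi> i j. c * X $ i $ j)"

definition finner :: "complex^'n^'m \<Rightarrow> complex^'n^'m \<Rightarrow> complex" where
  "finner X Y = trace (adj X ** Y)"

definition hurwitz :: "real^'n^'n \<Rightarrow> bool" where
  "hurwitz A \<longleftrightarrow> (\<forall>s::complex. det (mat s - cmat A) = 0 \<longrightarrow> Re s < 0)"

definition Gtf :: "real^'n^'n \<Rightarrow> complex \<Rightarrow> complex^'n^'n" where
  "Gtf A s = matrix_inv (mat s - cmat A)"

definition Ftf :: "real^'n^'n \<Rightarrow> real^'m^'n \<Rightarrow> real^'n^'r \<Rightarrow> complex \<Rightarrow> complex^'m^'r" where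
  "Ftf A B C s = cmat C ** Gtf A s ** cmat B"

definition blk :: "'a^'n^'n \<Rightarrow> 'a^'m^'n \<Rightarrow> 'a^'n^'r \<Rightarrow> 'a^'m^'r \<Rightarrow> 'a^('n+'m)^('n+'r)" where
  "blk A B C D = (\<chi> i j. (case i of
      Inl a \<Rightarrow> (case j of Inl b \<Rightarrow> A $ a $ b | Inr b \<Rightarrow> B $ a $ b)
    | Inr a \<Rightarrow> (case j of Inl b \<Rightarrow> C $ a $ b | Inr b \<Rightarrow> D $ a $ b)))"

definition vstack :: "'a^'k^'n \<Rightarrow> 'a^'k^'r \<Rightarrow> 'a^'k^('n+'r)" where
  "vstack X Y = (\<chi> i. (case i of Inl a \<Rightarrow> X $ a | Inr b \<Rightarrow> Y $ b))"

definition hstack :: "'a^'n^'k \<Rightarrow> 'a^'m^'k \<Rightarrow> 'a^('n+'m)^'k" where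
  "hstack X Y = (\<chi> i j. (case j of Inl a \<Rightarrow> X $ i $ a | Inr b \<Rightarrow> Y $ i $ b))"

definition blkA :: "'a^('n::finite+'m::finite)^('n+'r::finite) \<Rightarrow> 'a^'n^'n" where
  "blkA G = (\<chi> i j. G $ Inl i $ Inl j)"
definition blkB :: "'a^('n::finite+'m::finite)^('n+'r::finite) \<Rightarrow> 'a^'m^'n" where
  "blkB G = (\<chi> i j. G $ Inl i $ Inr j)"
definition blkC :: "'a^('n::finite+'m::finite)^('n+'r::finite) \<Rightarrow> 'a^'n^'r" where
  "blkC G = (\<chi> i j. G $ Inr i $ Inl j)"

definition Pfrak :: "'a::zero^('n::finite+'m::finite)^('n+'r::finite) \<Rightarrow> 'a^('n+'m)^('n+'r)" where
  "Pfrak X = (\<chi> i j. (case (i, j) of (Inr _, Inr _) \<Rightarrow> 0 | _ \<Rightarrow> X $ i $ j))"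

definition zeroBR :: "(real^('n::finite+'m::finite)^('n+'r::finite)) set" where
  "zeroBR = {G. \<forall>i j. G $ Inr i $ Inr j = 0}"

text \<open>The cost V as a function of Gamma (the integrand is real for self-adjoint M).\<close>
definition Vcost :: "(real \<Rightarrow> complex^'m^'r \<Rightarrow> complex^'m^'r) \<Rightarrow> real^('n::finite+'m::finite)^('n+'r::finite) \<Rightarrow> real" where
  "Vcost M G = 1 / (4 * pi) * (LINT l|lborel.
     Re (finner (Ftf (blkA G) (blkB G) (blkC G) (\<i> * complex_of_real l))
                (M l (Ftf (blkA G) (blkB G) (blkC G) (\<i> * complex_of_real l)))))"

end

theory Submission
  imports Defs "HOL-Probability.Sinc_Integral"
begin


lemma norm_sum_mult_le:
  fixes a b :: "'i::finite \<Rightarrow> complex"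
  shows "norm (\<Sum>j\<in>UNIV. a j * b j) \<le> L2_set (\<lambda>j. norm (a j)) UNIV * L2_set (\<lambda>j. norm (b j)) UNIV"
proof -
  have "norm (\<Sum>j\<in>UNIV. a j * b j) \<le> (\<Sum>j\<in>UNIV. norm (a j * b j))" by (rule norm_sum)
  also have "\<dots> = (\<Sum>j\<in>UNIV. \<bar>norm (a j)\<bar> * \<bar>norm (b j)\<bar>)" by (simp add: norm_mult)
  also have "\<dots> \<le> L2_set (\<lambda>j. norm (a j)) UNIV * L2_set (\<lambda>j. norm (b j)) UNIV" by (rule L2_set_mult_ineq)
  finally show ?thesis .
qed

lemma norm_mvmult_le:
  fixes A :: "complex^'n^'m" and v :: "complex^'n"
  shows "norm (A *v v) \<le> norm A * norm v"
proof -
  have "norm ((A *v v) $ i) \<le> norm (A $ i) * norm v" for i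
    unfolding matrix_vector_mult_def norm_vec_def[of "A $ i"] norm_vec_def[of v]
    using norm_sum_mult_le[of "\<lambda>j. A $ i $ j" "\<lambda>j. v $ j"] by simp
  then have "norm (A *v v) \<le> L2_set (\<lambda>i. norm (A $ i) * norm v) UNIV"
    unfolding norm_vec_def[of "A *v v"] by (intro L2_set_mono) auto
  also have "\<dots> = norm A * norm v"
    by (simp add: norm_vec_def[of A] L2_set_left_distrib)
  finally show ?thesis .
qed

lemma mmult_row: "(A ** B) $ i = (\<Sum>j\<in>UNIV. (A $ i $ j) *s (B $ j))"
  by (simp add: matrix_matrix_mult_def vec_eq_iff sum_component)

lemma norm_smult_vec: fixes v :: "complex^'n" shows "norm (c *s v) = norm c * norm v"
  unfolding norm_vec_def by (simp add: norm_mult L2_set_right_distrib)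

lemma norm_mmult_le:
  fixes A :: "complex^'n^'m" and B :: "complex^'k^'n"
  shows "norm (A ** B) \<le> norm A * norm B"
proof -
  have "norm ((A ** B) $ i) \<le> norm (A $ i) * norm B" for i
  proof -
    have "norm ((A ** B) $ i) \<le> (\<Sum>j\<in>UNIV. norm ((A $ i $ j) *s (B $ j)))"
      unfolding mmult_row by (rule norm_sum)
    also have "\<dots> = (\<Sum>j\<in>UNIV. \<bar>norm (A $ i $ j)\<bar> * \<bar>norm (B $ j)\<bar>)"
      by (simp add: norm_smult_vec)
    also have "\<dots> \<le> L2_set (\<lambda>j. norm (A $ i $ j)) UNIV * L2_set (\<lambda>j. norm (B $ j)) UNIV"
      by (rule L2_set_mult_ineq)
    finally show ?thesis by (simp add: norm_vec_def[of "A $ i"] norm_vec_def[of B])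
  qed
  then have "norm (A ** B) \<le> L2_set (\<lambda>i. norm (A $ i) * norm B) UNIV"
    unfolding norm_vec_def[of "A ** B"] by (intro L2_set_mono) auto
  also have "\<dots> = norm A * norm B"
    by (simp add: norm_vec_def[of A] L2_set_left_distrib)
  finally show ?thesis .
qed

lemma norm_mat_sq: "(norm (X::complex^'n^'m))^2 = (\<Sum>i\<in>UNIV. \<Sum>j\<in>UNIV. (norm (X $ i $ j))^2)"
  by (simp add: norm_vec_def L2_set_def sum_nonneg)

lemma norm_adj: "norm (adj X) = norm X"
proof -
  have "(norm (adj X))^2 = (norm X)^2"
    unfolding norm_mat_sq adj_def by (simp, rule sum.swap)
  then show ?thesis by (simp add: power2_eq_iff_nonneg)
qed

lemma norm_cmat: "norm (cmat X) = norm X"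
proof -
  have "(norm (cmat X))^2 = (norm X)^2"
    by (simp add: norm_mat_sq cmat_def norm_vec_def L2_set_def sum_nonneg)
  then show ?thesis by (simp add: power2_eq_iff_nonneg)
qed

lemma finner_sum: "finner X Y = (\<Sum>k\<in>UNIV. \<Sum>i\<in>UNIV. cnj (X $ k $ i) * Y $ k $ i)"
  unfolding finner_def trace_def adj_def matrix_matrix_mult_def by (simp, rule sum.swap)

lemma norm_finner_le: "norm (finner X Y) \<le> norm X * norm Y"
proof -
  have "norm (finner X Y) \<le> (\<Sum>k\<in>UNIV. norm (\<Sum>i\<in>UNIV. cnj (X $ k $ i) * Y $ k $ i))"
    unfolding finner_sum by (rule norm_sum)
  also have "\<dots> \<le> (\<Sum>k\<in>UNIV. \<bar>norm (X $ k)\<bar> * \<bar>norm (Y $ k)\<bar>)"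
    apply (rule sum_mono)
    subgoal for k
    using norm_sum_mult_le[of "\<lambda>i. cnj (X $ k $ i)" "\<lambda>i. Y $ k $ i"]
    by (simp add: norm_vec_def)
    done
  also have "\<dots> \<le> norm X * norm Y"
    using L2_set_mult_ineq[of "\<lambda>k. norm (X $ k)" "\<lambda>k. norm (Y $ k)" UNIV]
    by (simp add: norm_vec_def[of X] norm_vec_def[of Y])
  finally show ?thesis .
qed

lemma mm_add_r: "((A::'a::semiring_1^'n^'m) + B) ** C = A ** C + B ** C"
  by (vector matrix_matrix_mult_def sum.distrib[symmetric] field_simps)
lemma mm_diff_l: "(A::'a::ring_1^'n^'m) ** (B - C) = A ** B - A ** C"
  by (vector matrix_matrix_mult_def sum_subtractf[symmetric] field_simps)
lemma mm_diff_r: "((A::'a::ring_1^'n^'m) - B) ** C = A ** C - B ** C"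
  by (vector matrix_matrix_mult_def sum_subtractf[symmetric] field_simps)
lemma mm_neg_l: "(- (A::'a::ring_1^'n^'m)) ** C = - (A ** C)"
  by (vector matrix_matrix_mult_def sum_negf[symmetric])
lemma mm_neg_r: "(A::'a::ring_1^'n^'m) ** (- C) = - (A ** C)"
  by (vector matrix_matrix_mult_def sum_negf[symmetric])

lemma mv_neg: "(A::'a::ring_1^'n^'m) *v (- x) = - (A *v x)"
  by (vector matrix_vector_mult_def sum_negf[symmetric])

lemma inj_pert:
  fixes X Xi E :: "complex^'n^'n"
  assumes XiX: "Xi ** X = mat 1" and small: "norm Xi * norm E \<le> 1/2"
  shows "invertible (X + E)"
proof -
  have z: "v = 0" if "(X + E) *v v = 0" for v
  proof -
    have "X *v v = - (E *v v)" using that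
      by (simp add: matrix_vector_mult_add_rdistrib eq_neg_iff_add_eq_0)
    then have "Xi *v (X *v v) = Xi *v (- (E *v v))" by simp
    then have "v = - ((Xi ** E) *v v)"
      by (simp add: matrix_vector_mul_assoc XiX mv_neg)
    then have "norm v = norm ((Xi ** E) *v v)" by (metis norm_minus_cancel)
    also have "\<dots> \<le> norm (Xi ** E) * norm v" by (rule norm_mvmult_le)
    also have "\<dots> \<le> (norm Xi * norm E) * norm v"
      by (intro mult_right_mono norm_mmult_le) simp
    also have "\<dots> \<le> 1/2 * norm v" by (intro mult_right_mono small) simp
    finally show ?thesis by simp
  qed
  have "inj ((*v) (X + E))"
  proof (rule injI)
    fix u w assume "(X + E) *v u = (X + E) *v w"
    then have "(X + E) *v (u - w) = 0" by (simp add: matrix_vector_mult_diff_distrib)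
    then show "u = w" using z by fastforce
  qed
  then have "det (matrix ((*v) (X + E))) \<noteq> 0"
    using det_nz_iff_inj_gen[of "(*v) (X + E)"] by simp
  then show ?thesis by (simp add: invertible_det_nz)
qed

lemma matrix_inv_props:
  fixes Y :: "'a::field^'n^'n"
  assumes "invertible Y"
  shows "Y ** matrix_inv Y = mat 1" "matrix_inv Y ** Y = mat 1"
  using assms unfolding invertible_def matrix_inv_def by (metis (mono_tags, lifting) someI_ex)+

lemma inv_unique:
  fixes Y W :: "'a::field^'n^'n"
  assumes "W ** Y = mat 1" shows "matrix_inv Y = W"
proof -
  have inv: "invertible Y" using assms invertible_left_inverse by blast
  have "W = W ** (Y ** matrix_inv Y)" using matrix_inv_props(1)[OF inv] by simp
  also have "\<dots> = matrix_inv Y" by (simp add: matrix_mul_assoc assms)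
  finally show ?thesis by simp
qed

lemma inv_pert:
  fixes X Xi E :: "complex^'n^'n"
  assumes XiX: "Xi ** X = mat 1" and small: "norm Xi * norm E \<le> 1/2"
  shows "invertible (X + E)" "matrix_inv (X + E) = Xi - matrix_inv (X + E) ** E ** Xi"
    "norm (matrix_inv (X + E)) \<le> 2 * norm Xi"
proof -
  show inv: "invertible (X + E)" by (rule inj_pert[OF assms])
  define W where "W = matrix_inv (X + E)"
  have XXi: "X ** Xi = mat 1" using XiX matrix_left_right_inverse by blast
  have "W ** (X + E) = mat 1" unfolding W_def by (rule matrix_inv_props(2)[OF inv])
  then have "W ** X = mat 1 - W ** E" by (simp add: matrix_add_ldistrib algebra_simps)
  then have "W ** X ** Xi = (mat 1 - W ** E) ** Xi" by simp
  then have eq: "W = Xi - W ** E ** Xi"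
    by (simp add: XXi mm_diff_r flip: matrix_mul_assoc)
  then show "matrix_inv (X + E) = Xi - matrix_inv (X + E) ** E ** Xi" by (simp add: W_def)
  have "norm W \<le> norm Xi + norm (W ** E ** Xi)"
    by (subst eq) (rule norm_triangle_ineq4)
  also have "norm (W ** E ** Xi) \<le> norm W * (norm E * norm Xi)"
  proof -
    have "norm (W ** E ** Xi) \<le> norm W * norm (E ** Xi)"
      by (metis matrix_mul_assoc norm_mmult_le)
    also have "\<dots> \<le> norm W * (norm E * norm Xi)" by (intro mult_left_mono norm_mmult_le) simp
    finally show ?thesis .
  qed
  also have "\<dots> \<le> norm W * (1/2)" by (intro mult_left_mono) (use small in \<open>simp_all add: mult.commute\<close>)
  finally show "norm (matrix_inv (X + E)) \<le> 2 * norm Xi" unfolding W_def by simp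
qed



lemma norm_mat: "norm (mat c :: complex^'n^'n) = norm c * sqrt (real CARD('n))"
proof -
  have "(norm (mat c :: complex^'n^'n))^2 = real CARD('n) * (norm c)^2"
    unfolding norm_mat_sq mat_def
    by (simp add: if_distrib if_distribR sum.delta cong: if_cong)
  also have "\<dots> = (norm c * sqrt (real CARD('n)))^2" by (simp add: power_mult_distrib)
  finally show ?thesis by (simp add: power2_eq_iff_nonneg)
qed

definition Xs :: "real^'n^'n \<Rightarrow> real \<Rightarrow> complex^'n^'n" where
  "Xs A l = mat (\<i> * complex_of_real l) - cmat A"

lemma Gtf_Xs: "Gtf A (\<i> * complex_of_real l) = matrix_inv (Xs A l)"
  by (simp add: Gtf_def Xs_def)

lemma hurwitz_inv: assumes h: "hurwitz A" shows "invertible (Xs A l)"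
  unfolding invertible_det_nz Xs_def
proof
  assume "det (mat (\<i> * complex_of_real l) - cmat A) = 0"
  then have "Re (\<i> * complex_of_real l) < 0" using h unfolding hurwitz_def by blast
  then show False by simp
qed

lemma mat_mult_mat: "(mat a :: 'a::comm_ring_1^'n^'n) ** mat b = mat (a * b)"
proof -
  have "(\<Sum>k\<in>UNIV. (if i = k then a else 0) * (if k = j then b else 0)) = (if i = j then a * b else 0)"
    for i j :: 'n
  proof -
    have "(\<Sum>k\<in>UNIV. (if i = k then a else 0) * (if k = j then b else 0))
       = (\<Sum>k\<in>UNIV. if k = i then (if i = j then a * b else 0) else 0)"
      by (rule sum.cong) auto
    also have "\<dots> = (if i = j then a * b else 0)" by simp
    finally show ?thesis .
  qed
  then show ?thesis unfolding matrix_matrix_mult_def mat_def by (simp add: vec_eq_iff)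
qed

lemma mat_add: "(mat a :: 'a::comm_ring_1^'n^'n) + mat b = mat (a + b)"
  unfolding mat_def by vector

lemma Xs_shift: "Xs (A::real^'n^'n) l = Xs A l0 + mat (\<i> * complex_of_real (l - l0))"
proof -
  have "mat (\<i> * complex_of_real l) = (mat (\<i> * complex_of_real l0) :: complex^'n^'n) + mat (\<i> * complex_of_real (l - l0))"
    by (simp add: mat_add of_real_diff right_diff_distrib)
  then show ?thesis unfolding Xs_def by (simp only: diff_add_eq)
qed



lemma resolvent_large:
  fixes A :: "real^'n^'n"
  assumes "\<bar>l\<bar> \<ge> 2 * sqrt (real CARD('n)) * norm A + 1"
  shows "invertible (Xs A l)" "norm (matrix_inv (Xs A l)) \<le> 2 * sqrt (real CARD('n)) / \<bar>l\<bar>"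
proof -
  let ?c = "\<i> * complex_of_real l"
  let ?s = "sqrt (real CARD('n))"
  have "2 * ?s * norm A \<ge> 0" by simp
  then have l0: "l \<noteq> 0" using assms by linarith
  have c0: "?c \<noteq> 0" using l0 by simp
  have nc: "norm ?c = \<bar>l\<bar>" by (simp add: norm_mult)
  have XiX: "mat (inverse ?c) ** mat ?c = (mat 1 :: complex^'n^'n)"
    by (simp only: mat_mult_mat left_inverse[OF c0])
  have nXi: "norm (mat (inverse ?c) :: complex^'n^'n) = ?s / \<bar>l\<bar>"
  proof -
    have ninv: "norm (inverse ?c) = inverse \<bar>l\<bar>" by (simp only: norm_inverse nc)
    show ?thesis by (simp only: norm_mat ninv divide_inverse mult.commute)
  qed
  have "?s / \<bar>l\<bar> * norm (- cmat A) = ?s * norm A / \<bar>l\<bar>" by (simp add: norm_cmat)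
  also have "\<dots> \<le> 1/2"
    using assms l0 by (simp add: divide_le_eq)
  finally have sm: "norm (mat (inverse ?c) :: complex^'n^'n) * norm (- cmat A) \<le> 1/2" unfolding nXi .
  have eq: "Xs A l = mat ?c + - cmat A" by (simp add: Xs_def)
  show "invertible (Xs A l)" unfolding eq by (rule inv_pert(1)[OF XiX sm])
  show "norm (matrix_inv (Xs A l)) \<le> 2 * ?s / \<bar>l\<bar>"
    unfolding eq using inv_pert(3)[OF XiX sm] nXi by simp
qed

lemma aux_sub: "(w::'a::ab_group_add) = g - x \<Longrightarrow> g - w = x" by simp

lemma resolvent_cont:
  fixes A :: "real^'n^'n"
  assumes inv: "\<And>l. invertible (Xs A l)"
  shows "continuous_on UNIV (\<lambda>l. matrix_inv (Xs A l))"
  unfolding continuous_on_iff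
proof (intro ballI allI impI)
  fix l0 :: real and e :: real assume e: "e > 0"
  let ?s = "sqrt (real CARD('n))"
  define G0 where "G0 = matrix_inv (Xs A l0)"
  have XiX: "G0 ** Xs A l0 = mat 1" unfolding G0_def by (rule matrix_inv_props(2)[OF inv])
  have spos: "?s > 0" by simp
  have g1: "norm G0 + 1 > 0" using norm_ge_zero[of G0] by linarith
  define a where "a = 1 / (2 * (norm G0 + 1) * ?s)"
  define k where "k = 2 * (norm G0 + 1)^2 * ?s"
  have apos: "a > 0" unfolding a_def using g1 spos by simp
  have kpos: "k > 0" unfolding k_def using g1 spos by simp
  define d where "d = min a (e / (k + 1))"
  have dpos: "d > 0" unfolding d_def using e kpos apos by simp
  show "\<exists>d>0. \<forall>l\<in>UNIV. dist l l0 < d \<longrightarrow> dist (matrix_inv (Xs A l)) (matrix_inv (Xs A l0)) < e"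
  proof (intro exI conjI ballI impI dpos)
    fix l assume "dist l l0 < d"
    then have ld: "\<bar>l - l0\<bar> < d" by (simp add: dist_real_def)
    define E :: "complex^'n^'n" where "E = mat (\<i> * complex_of_real (l - l0))"
    have "norm (\<i> * complex_of_real (l - l0)) = \<bar>l - l0\<bar>"
      by (simp only: norm_mult norm_ii norm_of_real mult_1)
    then have nE: "norm E = \<bar>l - l0\<bar> * ?s" by (simp only: E_def norm_mat)
    have la: "\<bar>l - l0\<bar> \<le> a" using ld unfolding d_def by simp
    have "norm E \<le> a * ?s" unfolding nE by (rule mult_right_mono[OF la]) simp
    also have "a * ?s = 1 / (2 * (norm G0 + 1))" unfolding a_def using spos by simp
    finally have nE1: "norm E \<le> 1 / (2 * (norm G0 + 1))" .
    have sm: "norm G0 * norm E \<le> 1/2"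
    proof -
      have "norm G0 * norm E \<le> (norm G0 + 1) * (1 / (2 * (norm G0 + 1)))"
        by (rule mult_mono[OF _ nE1]) simp_all
      also have "\<dots> = 1/2" using g1 by simp
      finally show ?thesis .
    qed
    have X: "Xs A l = Xs A l0 + E" unfolding E_def by (rule Xs_shift)
    define W where "W = matrix_inv (Xs A l)"
    have Weq: "W = G0 - W ** E ** G0" using inv_pert(2)[OF XiX sm] by (simp add: X W_def)
    have nW: "norm W \<le> 2 * norm G0" using inv_pert(3)[OF XiX sm] by (simp add: X W_def)
    have "dist W G0 = norm (W ** E ** G0)" using aux_sub[OF Weq] by (simp add: dist_norm norm_minus_commute)
    also have "\<dots> \<le> norm (W ** E) * norm G0" by (rule norm_mmult_le)
    also have "\<dots> \<le> norm W * norm E * norm G0"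
      by (intro mult_right_mono norm_mmult_le) simp
    also have "\<dots> \<le> (2 * (norm G0 + 1)) * norm E * (norm G0 + 1)"
    proof -
      have a: "norm W * norm E \<le> (2 * (norm G0 + 1)) * norm E"
        by (rule mult_right_mono) (use nW in simp_all)
      show ?thesis by (rule mult_mono[OF a]) simp_all
    qed
    also have "\<dots> = k * \<bar>l - l0\<bar>" by (simp add: nE power2_eq_square k_def)
    also have "\<dots> \<le> k * (e / (k + 1))"
    proof (rule mult_left_mono)
      show "\<bar>l - l0\<bar> \<le> e / (k + 1)" using ld unfolding d_def by simp
    qed (use kpos in simp)
    also have "\<dots> < e"
    proof -
      have "k * (e / (k + 1)) = e * (k / (k + 1))" by simp
      also have "\<dots> < e * 1" using e kpos by (intro mult_strict_left_mono) auto
      finally show ?thesis by simp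
    qed
    finally show "dist (matrix_inv (Xs A l)) (matrix_inv (Xs A l0)) < e" by (simp add: W_def G0_def)
  qed (rule dpos)
qed



lemma cmat_add: "cmat (X + Y) = cmat X + cmat Y"
  unfolding cmat_def by vector
lemma cmat_diff: "cmat (X - Y) = cmat X - cmat Y"
  unfolding cmat_def by vector
lemma cmat_zero: "cmat 0 = 0"
  unfolding cmat_def by vector

lemma resolvent_bound:
  fixes A :: "real^'n^'n"
  assumes inv: "\<And>l. invertible (Xs A l)"
  shows "\<exists>c>0. \<forall>l. norm (matrix_inv (Xs A l)) * (1 + \<bar>l\<bar>) \<le> c"
proof -
  let ?s = "sqrt (real CARD('n))"
  define L0 where "L0 = 2 * ?s * norm A + 1"
  have L0: "L0 \<ge> 1" unfolding L0_def by simp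
  have "compact ((\<lambda>l. matrix_inv (Xs A l)) ` {-L0..L0})"
    by (rule compact_continuous_image[OF continuous_on_subset[OF resolvent_cont[OF inv]]]) auto
  then have "bounded ((\<lambda>l. matrix_inv (Xs A l)) ` {-L0..L0})" by (rule compact_imp_bounded)
  then obtain g where g': "\<forall>x\<in>(\<lambda>l. matrix_inv (Xs A l)) ` {-L0..L0}. norm x \<le> g"
    unfolding bounded_iff by blast
  have g: "norm (matrix_inv (Xs A l)) \<le> g" if "l \<in> {-L0..L0}" for l
    using g' that by blast
  have "(0::real) \<in> {-L0..L0}" using L0 by simp
  then have "norm (matrix_inv (Xs A 0)) \<le> g" by (rule g)
  then have g0: "g \<ge> 0" by (rule order_trans[OF norm_ge_zero])
  define c where "c = g * (1 + L0) + 4 * ?s + 1"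
  have "g * (1 + L0) \<ge> 0" "4 * ?s \<ge> 0" using g0 L0 by simp_all
  then have cpos: "c > 0" unfolding c_def by linarith
  have "norm (matrix_inv (Xs A l)) * (1 + \<bar>l\<bar>) \<le> c" for l
  proof (cases "\<bar>l\<bar> \<le> L0")
    case True
    then have "l \<in> {-L0..L0}" by auto
    then have h1: "norm (matrix_inv (Xs A l)) \<le> g" by (rule g)
    have h2: "1 + \<bar>l\<bar> \<le> 1 + L0" using True by simp
    have "norm (matrix_inv (Xs A l)) * (1 + \<bar>l\<bar>) \<le> g * (1 + L0)"
      by (rule mult_mono[OF h1 h2 g0]) simp
    moreover have "4 * ?s + 1 \<ge> 0" by simp
    ultimately show ?thesis unfolding c_def by linarith
  next
    case False
    then have lL: "\<bar>l\<bar> \<ge> 2 * ?s * norm A + 1" unfolding L0_def by simp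
    have l1: "\<bar>l\<bar> \<ge> 1" using False L0 by simp
    have "norm (matrix_inv (Xs A l)) * (1 + \<bar>l\<bar>) \<le> (2 * ?s / \<bar>l\<bar>) * (1 + \<bar>l\<bar>)"
      by (rule mult_right_mono[OF resolvent_large(2)[OF lL]]) simp
    also have "\<dots> = 2 * ?s * ((1 + \<bar>l\<bar>) / \<bar>l\<bar>)" by simp
    also have "\<dots> \<le> 2 * ?s * 2"
      using l1 by (intro mult_left_mono) (simp_all add: divide_le_eq)
    moreover have "g * (1 + L0) \<ge> 0" using g0 L0 by simp
    ultimately show ?thesis unfolding c_def by linarith
  qed
  then show ?thesis using cpos by blast
qed

lemma resolvent_pert:
  fixes A dA :: "real^'n^'n"
  assumes inv: "\<And>l. invertible (Xs A l)"
    and c: "\<And>l. norm (matrix_inv (Xs A l)) * (1 + \<bar>l\<bar>) \<le> c"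
    and small: "norm dA * c \<le> 1/2"
  shows "invertible (Xs (A + dA) l)"
    "norm (matrix_inv (Xs (A + dA) l)) * (1 + \<bar>l\<bar>) \<le> 2 * c"
    "matrix_inv (Xs (A + dA) l) = matrix_inv (Xs A l) + matrix_inv (Xs (A + dA) l) ** cmat dA ** matrix_inv (Xs A l)"
proof -
  let ?G = "matrix_inv (Xs A l)"
  have XiX: "?G ** Xs A l = mat 1" by (rule matrix_inv_props(2)[OF inv])
  have eq: "Xs (A + dA) l = Xs A l + - cmat dA" unfolding Xs_def cmat_add by simp
  have lp: "1 + \<bar>l\<bar> \<ge> 1" by simp
  have "norm ?G * 1 \<le> norm ?G * (1 + \<bar>l\<bar>)" by (intro mult_left_mono) simp_all
  then have nG: "norm ?G \<le> c" using c[of l] by simp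
  have sm: "norm ?G * norm (- cmat dA) \<le> 1/2"
  proof -
    have "norm ?G * norm (- cmat dA) = norm dA * norm ?G" by (simp add: norm_cmat)
    also have "\<dots> \<le> norm dA * c" by (intro mult_left_mono nG) simp
    finally show ?thesis using small by simp
  qed
  show "invertible (Xs (A + dA) l)" unfolding eq by (rule inv_pert(1)[OF XiX sm])
  have "norm (matrix_inv (Xs (A + dA) l)) * (1 + \<bar>l\<bar>) \<le> (2 * norm ?G) * (1 + \<bar>l\<bar>)"
    unfolding eq by (rule mult_right_mono[OF inv_pert(3)[OF XiX sm]]) simp
  also have "\<dots> \<le> 2 * c" using c[of l] by simp
  finally show "norm (matrix_inv (Xs (A + dA) l)) * (1 + \<bar>l\<bar>) \<le> 2 * c" .
  show "matrix_inv (Xs (A + dA) l) = ?G + matrix_inv (Xs (A + dA) l) ** cmat dA ** ?G"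
    using inv_pert(2)[OF XiX sm] unfolding eq by (simp add: mm_neg_l mm_neg_r)
qed


lemma integrable_inv_sq: "integrable lborel (\<lambda>x::real. inverse (1 + x^2))"
  using integrable_inverse_1_plus_square unfolding set_integrable_def by simp



lemma adj_mult: "adj ((P::complex^'k^'m) ** Q) = adj Q ** adj P"
  by (simp add: adj_def matrix_matrix_mult_def vec_eq_iff mult.commute)

lemma adj_adj: "adj (adj X) = X"
  by (simp add: adj_def vec_eq_iff)

lemma adj_cmat: "adj (cmat X) = cmat (transpose X)"
  by (simp add: adj_def cmat_def transpose_def vec_eq_iff)

lemma finner_mult_l: "finner ((P::complex^'k^'m) ** Q) Y = finner Q (adj P ** Y)"
  unfolding finner_def adj_mult by (simp add: matrix_mul_assoc)

lemma finner_mult_r: "finner ((Q::complex^'k^'m) ** P) Y = finner Q (Y ** adj P)"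
  unfolding finner_def adj_mult
  by (metis matrix_mul_assoc trace_mul_sym)

lemma finner_cnj: "finner Y X = cnj (finner X Y)"
  unfolding finner_sum by (simp add: mult.commute)

lemma finner_add_l: "finner (X + Y) Z = finner X Z + finner Y Z"
  unfolding finner_sum by (simp add: sum.distrib distrib_right)
lemma finner_add_r: "finner Z (X + Y) = finner Z X + finner Z Y"
  unfolding finner_sum by (simp add: sum.distrib distrib_left)
lemma finner_diff_l: "finner (X - Y) Z = finner X Z - finner Y Z"
  unfolding finner_sum by (simp add: sum_subtractf left_diff_distrib)
lemma finner_diff_r: "finner Z (X - Y) = finner Z X - finner Z Y"
  unfolding finner_sum by (simp add: sum_subtractf right_diff_distrib)

lemma Re_finner_cmat: "Re (finner (cmat D) Y) = inner D (remat Y)"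
  unfolding finner_sum cmat_def remat_def inner_vec_def by (simp add: Re_sum)

lemma sum_UNIV_plus:
  "(\<Sum>i\<in>(UNIV::('a::finite + 'b::finite) set). f i) = (\<Sum>a\<in>UNIV. f (Inl a)) + (\<Sum>b\<in>UNIV. f (Inr b))"
  by (subst UNIV_Plus_UNIV[symmetric], subst sum.Plus) (auto simp: o_def)

definition blkD :: "'a^('n::finite+'m::finite)^('n+'r::finite) \<Rightarrow> 'a^'m^'r" where
  "blkD G = (\<chi> i j. G $ Inr i $ Inr j)"

lemma blk_decomp: "G = blk (blkA G) (blkB G) (blkC G) (blkD G)"
  by (simp add: blk_def blkA_def blkB_def blkC_def blkD_def vec_eq_iff split: sum.split)

lemma blk_parts: "blkA (blk a b c d) = a" "blkB (blk a b c d) = b" "blkC (blk a b c d) = c" "blkD (blk a b c d) = d"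
  by (simp_all add: blk_def blkA_def blkB_def blkC_def blkD_def vec_eq_iff)

lemma blk_lin: "blkA (X - Y) = blkA X - blkA Y" "blkB (X - Y) = blkB X - blkB Y" "blkC (X - Y) = blkC X - blkC Y"
  by (simp_all add: blkA_def blkB_def blkC_def vec_eq_iff)

lemma norm_mat_sq_gen: "(norm (X::'a::real_normed_vector^'n^'m))^2 = (\<Sum>i\<in>UNIV. \<Sum>j\<in>UNIV. (norm (X $ i $ j))^2)"
  by (simp add: norm_vec_def L2_set_def sum_nonneg)

lemma norm_blk_sq: "(norm (blk a b c d :: 'a::real_normed_vector^_^_))^2 = (norm a)^2 + (norm b)^2 + (norm c)^2 + (norm d)^2"
  unfolding norm_mat_sq_gen by (simp add: sum_UNIV_plus blk_def sum.distrib)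

lemma norm_blk_le: "norm (blk a b c d :: 'a::real_normed_vector^_^_) \<le> norm a + norm b + norm c + norm d"
proof -
  have "(norm (blk a b c d))^2 \<le> (norm a + norm b + norm c + norm d)^2"
    unfolding norm_blk_sq by (simp add: power2_eq_square algebra_simps)
  then show ?thesis by (rule power2_le_imp_le) simp
qed

lemma norm_blkA_le: "norm (blkA G :: 'a::real_normed_vector^_^_) \<le> norm G"
  and norm_blkB_le: "norm (blkB G) \<le> norm G"
  and norm_blkC_le: "norm (blkC G) \<le> norm G"
proof -
  have sq: "(norm G)^2 = (norm (blkA G))^2 + (norm (blkB G))^2 + (norm (blkC G))^2 + (norm (blkD G))^2"
    by (subst blk_decomp) (rule norm_blk_sq)
  show "norm (blkA G) \<le> norm G" by (rule power2_le_imp_le) (use sq in simp_all)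
  show "norm (blkB G) \<le> norm G" by (rule power2_le_imp_le) (use sq in simp_all)
  show "norm (blkC G) \<le> norm G" by (rule power2_le_imp_le) (use sq in simp_all)
qed

lemma vstack_mult: "vstack U V ** Y = vstack (U ** Y) (V ** Y)"
  by (simp add: vstack_def matrix_matrix_mult_def vec_eq_iff split: sum.split)

lemma mult_hstack: "Y ** hstack W Z = hstack (Y ** W) (Y ** Z)"
  by (simp add: hstack_def matrix_matrix_mult_def vec_eq_iff split: sum.split)

lemma vstack_hstack_blk: "vstack (hstack a b) (hstack c d) = blk a b c d"
  by (simp add: vstack_def hstack_def blk_def vec_eq_iff split: sum.split)

lemma hstack_vstack_blk: "hstack (vstack a c) (vstack b d) = blk a b c d"
  by (simp add: vstack_def hstack_def blk_def vec_eq_iff split: sum.split)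

lemma big_prod_blk: "vstack U V ** X ** hstack W Z = blk (U ** X ** W) (U ** X ** Z) (V ** X ** W) (V ** X ** Z)"
  by (simp add: vstack_mult mult_hstack vstack_hstack_blk hstack_vstack_blk)

lemma Pfrak_blk: "Pfrak (blk a b c d) = blk a b c 0"
  by (simp add: Pfrak_def blk_def vec_eq_iff split: sum.split)

lemma remat_blk: "remat (blk a b c d) = blk (remat a) (remat b) (remat c) (remat d)"
  by (simp add: remat_def blk_def vec_eq_iff split: sum.split)

lemma remat_zero: "remat 0 = 0" by (simp add: remat_def vec_eq_iff)

lemma inner_blk: "inner (blk a b c d) G = inner a (blkA G) + inner b (blkB G) + inner c (blkC G) + inner d (blkD G)"
  unfolding inner_vec_def by (simp add: sum_UNIV_plus blk_def blkA_def blkB_def blkC_def blkD_def sum.distrib)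

lemma norm_remat_le: "norm (remat X) \<le> norm X"
proof -
  have "(norm (remat X))^2 \<le> (norm X)^2"
    unfolding norm_mat_sq_gen remat_def
    by (auto intro!: sum_mono simp: cmod_power2)
  then show ?thesis by (rule power2_le_imp_le) simp
qed



definition Eunit :: "'m::finite \<Rightarrow> 'n::finite \<Rightarrow> complex^'n^'m" where
  "Eunit i j = (\<chi> a b. if a = i \<and> b = j then 1 else 0)"

lemma cscale_comp: "cscale c X $ a $ b = c * X $ a $ b"
  by (simp add: cscale_def)

lemma mat_decomp: "X = (\<Sum>i\<in>UNIV. \<Sum>j\<in>UNIV. cscale (X $ i $ j) (Eunit i j))"
proof -
  have "(\<Sum>i\<in>UNIV. \<Sum>j\<in>UNIV. cscale (X $ i $ j) (Eunit i j)) $ a $ b = X $ a $ b" for a b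
  proof -
    have "(\<Sum>i\<in>UNIV. \<Sum>j\<in>UNIV. cscale (X $ i $ j) (Eunit i j)) $ a $ b
        = (\<Sum>i\<in>UNIV. \<Sum>j\<in>UNIV. X $ i $ j * Eunit i j $ a $ b)"
      by (simp only: sum_component cscale_comp)
    also have "\<dots> = (\<Sum>i\<in>UNIV. if i = a then X $ a $ b else 0)"
    proof (rule sum.cong)
      fix i show "(\<Sum>j\<in>UNIV. X $ i $ j * Eunit i j $ a $ b) = (if i = a then X $ a $ b else 0)"
      proof (cases "i = a")
        case True
        have "(\<Sum>j\<in>UNIV. X $ i $ j * Eunit i j $ a $ b) = (\<Sum>j\<in>UNIV. if j = b then X $ a $ b else 0)"
          by (rule sum.cong) (auto simp: Eunit_def True)
        then show ?thesis using True by simp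
      next
        case False
        then show ?thesis by (simp add: Eunit_def)
      qed
    qed simp
    also have "\<dots> = X $ a $ b" by simp
    finally show ?thesis .
  qed
  then show ?thesis by (simp add: vec_eq_iff)
qed

lemma cscale_split: "cscale c X = Re c *\<^sub>R X + Im c *\<^sub>R cscale \<i> X"
proof -
  have "c * x = complex_of_real (Re c) * x + complex_of_real (Im c) * (\<i> * x)" for x
    by (subst complex_eq[of c]) (simp add: algebra_simps)
  note * = this
  show ?thesis unfolding vec_eq_iff
  proof (intro allI)
    fix i j
    show "cscale c X $ i $ j = (Re c *\<^sub>R X + Im c *\<^sub>R cscale \<i> X) $ i $ j"
      using *[of "X $ i $ j"] by (simp add: cscale_def) (simp add: scaleR_conv_of_real)
  qed
qed

lemma meas_entry:
  fixes Y :: "real \<Rightarrow> complex^'n^'m"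
  assumes "Y \<in> borel_measurable lborel"
  shows "(\<lambda>l. Y l $ i $ j) \<in> borel_measurable lborel"
proof -
  have "(\<lambda>X::complex^'n^'m. X $ i $ j) \<in> borel_measurable borel"
    by (intro borel_measurable_continuous_onI continuous_intros)
  from measurable_compose[OF assms this] show ?thesis by simp
qed

lemma meas_cscale:
  fixes Y :: "real \<Rightarrow> complex^'n^'m"
  assumes f: "f \<in> borel_measurable lborel" and Y: "Y \<in> borel_measurable lborel"
  shows "(\<lambda>l. cscale (f l) (Y l)) \<in> borel_measurable lborel"
proof -
  have ci: "(cscale \<i> :: complex^'n^'m \<Rightarrow> _) \<in> borel_measurable borel"
    unfolding cscale_def
    by (intro borel_measurable_continuous_onI continuous_on_vec_lambda continuous_on_mult_left continuous_on_component continuous_on_id)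
  have m1: "(\<lambda>l. cscale \<i> (Y l)) \<in> borel_measurable lborel"
    using measurable_compose[OF Y ci] by simp
  have re: "(\<lambda>l. Re (f l)) \<in> borel_measurable lborel" using measurable_compose[OF f borel_measurable_Re] by simp
  have im: "(\<lambda>l. Im (f l)) \<in> borel_measurable lborel" using measurable_compose[OF f borel_measurable_Im] by simp
  have eq: "(\<lambda>l. cscale (f l) (Y l)) = (\<lambda>l. Re (f l) *\<^sub>R Y l + Im (f l) *\<^sub>R cscale \<i> (Y l))"
    by (rule ext, rule cscale_split)
  show ?thesis unfolding eq
    by (intro borel_measurable_add borel_measurable_scaleR re im Y m1)
qed

locale Mop =
  fixes M :: "real \<Rightarrow> complex^'m::finite^'r::finite \<Rightarrow> complex^'m^'r" and K :: real
  assumes M_add: "\<And>l X Y. M l (X + Y) = M l X + M l Y"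
    and M_scale: "\<And>l c X. M l (cscale c X) = cscale c (M l X)"
    and M_selfadj: "\<And>l X Y. finner X (M l Y) = finner (M l X) Y"
    and M_meas: "\<And>X. (\<lambda>l. M l X) \<in> borel_measurable lborel"
    and M_bdd: "\<And>l X. norm (M l X) \<le> K * norm X"
    and K0: "K \<ge> 0"
begin

lemma M_zero: "M l 0 = 0"
  using M_add[of l 0 0] by simp

lemma M_diff: "M l (X - Y) = M l X - M l Y"
  using M_add[of l "X - Y" Y] by (simp add: algebra_simps)

lemma M_sum: "M l (\<Sum>i\<in>S. f i) = (\<Sum>i\<in>S. M l (f i))"
proof (induction S rule: infinite_finite_induct)
  case (infinite S) then show ?case by (simp add: M_zero)
next
  case empty then show ?case by (simp add: M_zero)
next
  case (insert x F) then show ?case by (simp add: M_add)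
qed

lemma M_meas_comp:
  assumes Y: "Y \<in> borel_measurable lborel"
  shows "(\<lambda>l. M l (Y l)) \<in> borel_measurable lborel"
proof -
  have eq: "M l (Y l) = (\<Sum>i\<in>UNIV. \<Sum>j\<in>UNIV. cscale (Y l $ i $ j) (M l (Eunit i j)))" for l
    by (subst mat_decomp[of "Y l"]) (simp add: M_sum M_scale)
  show ?thesis unfolding eq
    by (intro borel_measurable_sum meas_cscale meas_entry[OF Y] M_meas)
qed

lemma Re_finner_M_sym: "Re (finner X (M l Y)) = Re (finner Y (M l X))"
proof -
  have "finner X (M l Y) = cnj (finner Y (M l X))"
    by (simp only: M_selfadj finner_cnj[of "M l X" Y])
  then show ?thesis by simp
qed

end



lemma cont_mm:
  fixes f :: "_ \<Rightarrow> 'a::real_normed_algebra_1^'n^'m" and g :: "_ \<Rightarrow> 'a^'k^'n"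
  assumes "continuous_on S f" "continuous_on S g"
  shows "continuous_on S (\<lambda>x. f x ** g x)"
  unfolding matrix_matrix_mult_def
  by (intro continuous_on_vec_lambda continuous_on_sum continuous_on_mult continuous_on_component assms)

lemma cont_adj: "continuous_on S f \<Longrightarrow> continuous_on S (\<lambda>x. adj (f x))"
  unfolding adj_def by (intro continuous_on_vec_lambda continuous_on_cnj continuous_on_component)

lemma cont_remat: "continuous_on S f \<Longrightarrow> continuous_on S (\<lambda>x. remat (f x))"
  unfolding remat_def by (intro continuous_on_vec_lambda continuous_on_Re continuous_on_component)

lemma cont_vstack:
  assumes "continuous_on S f" "continuous_on S g"
  shows "continuous_on S (\<lambda>x. vstack (f x) (g x))"
  unfolding vstack_def
proof (intro continuous_on_vec_lambda)
  fix i show "continuous_on S (\<lambda>x. case i of Inl a \<Rightarrow> f x $ a | Inr b \<Rightarrow> g x $ b)"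
    by (cases i) (simp_all add: continuous_on_component assms)
qed

lemma cont_hstack:
  assumes "continuous_on S f" "continuous_on S g"
  shows "continuous_on S (\<lambda>x. hstack (f x) (g x))"
  unfolding hstack_def
proof (intro continuous_on_vec_lambda)
  fix i j show "continuous_on S (\<lambda>x. case j of Inl a \<Rightarrow> f x $ i $ a | Inr b \<Rightarrow> g x $ i $ b)"
    by (cases j) (simp_all add: continuous_on_component assms)
qed

lemma cont_Pfrak:
  assumes "continuous_on S f"
  shows "continuous_on S (\<lambda>x. Pfrak (f x))"
  unfolding Pfrak_def
proof (intro continuous_on_vec_lambda)
  fix i j show "continuous_on S (\<lambda>x. case (i, j) of (Inr _, Inr _) \<Rightarrow> 0 | _ \<Rightarrow> f x $ i $ j)"
    by (cases i; cases j) (simp_all add: continuous_on_component assms)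
qed

lemma cont_finner:
  assumes "continuous_on S f" "continuous_on S g"
  shows "continuous_on S (\<lambda>x. finner (f x) (g x))"
  unfolding finner_def trace_def
  by (intro continuous_on_sum continuous_on_component cont_mm cont_adj assms)

lemma r_le1: "inverse (1 + \<bar>l::real\<bar>) \<le> 1"
  using le_imp_inverse_le[of 1 "1 + \<bar>l\<bar>"] by simp
lemma r_pos: "inverse (1 + \<bar>l::real\<bar>) > 0"
  by (simp add: add_pos_nonneg)
lemma r_sq: "(inverse (1 + \<bar>l::real\<bar>))^2 \<le> inverse (1 + l^2)"
proof -
  have "1 + l^2 \<le> (1 + \<bar>l\<bar>)^2" by (simp add: power2_eq_square algebra_simps)
  moreover have "0 < 1 + l^2" by (simp add: add_pos_nonneg)
  ultimately have "inverse ((1 + \<bar>l\<bar>)^2) \<le> inverse (1 + l^2)" by (rule le_imp_inverse_le)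
  then show ?thesis by (simp add: power_inverse)
qed

lemma G_le: "norm X * (1 + \<bar>l::real\<bar>) \<le> c \<Longrightarrow> norm X \<le> c * inverse (1 + \<bar>l\<bar>)"
proof -
  assume a: "norm X * (1 + \<bar>l\<bar>) \<le> c"
  have p: "1 + \<bar>l\<bar> > 0" by (simp add: add_pos_nonneg)
  show ?thesis using a p by (simp add: field_simps)
qed

lemma integrable_dom:
  fixes f :: "real \<Rightarrow> 'b::{banach, second_countable_topology}"
  assumes m: "f \<in> borel_measurable lborel" and b: "\<And>l. norm (f l) \<le> k * inverse (1 + l^2)"
  shows "integrable lborel f"
proof (rule Bochner_Integration.integrable_bound[OF integrable_mult_right[OF integrable_inv_sq, of k] m])
  show "AE x in lborel. norm (f x) \<le> norm (k * inverse (1 + x^2))"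
    using b by (intro AE_I2) (smt (verit) real_norm_def)
qed

lemma meas_cont: "continuous_on UNIV f \<Longrightarrow> f \<in> borel_measurable lborel"
  unfolding measurable_lborel2 by (rule borel_measurable_continuous_onI)

lemma norm_cmat_mm3: "norm (cmat C ** G ** cmat B) \<le> norm C * norm G * norm B"
proof -
  have "norm (cmat C ** G ** cmat B) \<le> norm (cmat C ** G) * norm (cmat B)" by (rule norm_mmult_le)
  also have "\<dots> \<le> norm (cmat C) * norm G * norm (cmat B)" by (intro mult_right_mono norm_mmult_le) simp
  finally show ?thesis by (simp add: norm_cmat)
qed

context Mop begin

lemma integrable_quad:
  fixes A' :: "real^'n::finite^'n" and B' :: "real^'m^'n" and C' :: "real^'n^'r"
  assumes inv: "\<And>l. invertible (Xs A' l)"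
    and cb: "\<And>l. norm (matrix_inv (Xs A' l)) * (1 + \<bar>l\<bar>) \<le> c'"
  shows "integrable lborel (\<lambda>l. Re (finner (cmat C' ** matrix_inv (Xs A' l) ** cmat B')
                                    (M l (cmat C' ** matrix_inv (Xs A' l) ** cmat B'))))"
proof -
  define F where "F l = cmat C' ** matrix_inv (Xs A' l) ** cmat B'" for l
  have Fc: "continuous_on UNIV F" unfolding F_def
    by (intro cont_mm continuous_on_const resolvent_cont inv)
  have Fm: "F \<in> borel_measurable lborel" by (rule meas_cont[OF Fc])
  have MFm: "(\<lambda>l. M l (F l)) \<in> borel_measurable lborel" by (rule M_meas_comp[OF Fm])
  have Psi: "(\<lambda>p. Re (finner (fst p) (snd p))) \<in> borel_measurable borel"
    by (intro borel_measurable_continuous_onI continuous_on_Re cont_finner continuous_on_fst continuous_on_snd continuous_on_id)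
  have m: "(\<lambda>l. Re (finner (F l) (M l (F l)))) \<in> borel_measurable lborel"
    using measurable_compose[OF borel_measurable_Pair[OF Fm MFm] Psi] by simp
  define a where "a = norm C' * c' * norm B'"
  have b: "norm (Re (finner (F l) (M l (F l)))) \<le> (K * a^2) * inverse (1 + l^2)" for l
  proof -
    have c'0: "c' \<ge> 0" using cb[of l] by (smt (verit) mult_nonneg_nonneg norm_ge_zero)
    have nF: "norm (F l) \<le> a * inverse (1 + \<bar>l\<bar>)"
    proof -
      have "norm (F l) \<le> norm C' * norm (matrix_inv (Xs A' l)) * norm B'" unfolding F_def by (rule norm_cmat_mm3)
      also have "\<dots> \<le> norm C' * (c' * inverse (1 + \<bar>l\<bar>)) * norm B'"
        by (intro mult_right_mono mult_left_mono G_le cb) simp_all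
      finally show ?thesis by (simp add: a_def mult_ac)
    qed
    have "norm (Re (finner (F l) (M l (F l)))) \<le> norm (finner (F l) (M l (F l)))" by (simp add: abs_Re_le_cmod)
    also have "\<dots> \<le> norm (F l) * norm (M l (F l))" by (rule norm_finner_le)
    also have "\<dots> \<le> norm (F l) * (K * norm (F l))" by (intro mult_left_mono M_bdd) simp
    also have "\<dots> = K * (norm (F l))^2" by (simp add: power2_eq_square)
    also have "\<dots> \<le> K * (a * inverse (1 + \<bar>l\<bar>))^2"
      by (intro mult_left_mono power_mono nF K0) simp
    also have "\<dots> = (K * a^2) * (inverse (1 + \<bar>l\<bar>))^2" by (simp add: power_mult_distrib)
    also have "\<dots> \<le> (K * a^2) * inverse (1 + l^2)"
      by (intro mult_left_mono r_sq) (simp add: K0)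
    finally show ?thesis .
  qed
  show ?thesis using integrable_dom[OF m b] unfolding F_def .
qed

end



lemma grad_identity:
  fixes G :: "complex^'n^'n" and X :: "complex^'m^'r" and B :: "real^'m^'n" and C :: "real^'n^'r"
    and D :: "real^('n+'m)^('n+'r)"
  shows "inner (remat (Pfrak (vstack (adj G ** cmat (transpose C)) (mat 1) ** X
            ** hstack (cmat (transpose B) ** adj G) (mat 1)))) D
       = Re (finner (cmat (blkC D) ** G ** cmat B + cmat C ** G ** cmat (blkA D) ** G ** cmat B
                     + cmat C ** G ** cmat (blkB D)) X)"
proof -
  let ?U = "adj G ** cmat (transpose C)" and ?W = "cmat (transpose B) ** adj G"
  have lhs: "inner (remat (Pfrak (vstack ?U (mat 1) ** X ** hstack ?W (mat 1)))) D
     = inner (remat (?U ** X ** ?W)) (blkA D) + inner (remat (?U ** X)) (blkB D) + inner (remat (X ** ?W)) (blkC D)"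
    by (simp add: big_prod_blk Pfrak_blk remat_blk remat_zero inner_blk)
  have UC: "adj (cmat C ** G) = ?U" by (simp add: adj_mult adj_cmat)
  have WB: "adj (G ** cmat B) = ?W" by (simp add: adj_mult adj_cmat)
  have t1: "Re (finner (cmat (blkC D) ** G ** cmat B) X) = inner (remat (X ** ?W)) (blkC D)"
  proof -
    have "finner (cmat (blkC D) ** G ** cmat B) X = finner (cmat (blkC D)) (X ** adj (G ** cmat B))"
      by (simp only: finner_mult_r matrix_mul_assoc[symmetric])
    then show ?thesis by (simp add: WB Re_finner_cmat inner_commute)
  qed
  have t2: "Re (finner (cmat C ** G ** cmat (blkA D) ** G ** cmat B) X) = inner (remat (?U ** X ** ?W)) (blkA D)"
  proof -
    have "cmat C ** G ** cmat (blkA D) ** G ** cmat B = (cmat C ** G) ** cmat (blkA D) ** (G ** cmat B)"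
      by (simp add: matrix_mul_assoc)
    then have "finner (cmat C ** G ** cmat (blkA D) ** G ** cmat B) X
        = finner ((cmat C ** G) ** cmat (blkA D) ** (G ** cmat B)) X" by simp
    also have "\<dots> = finner ((cmat C ** G) ** cmat (blkA D)) (X ** adj (G ** cmat B))" by (rule finner_mult_r)
    also have "\<dots> = finner (cmat (blkA D)) (adj (cmat C ** G) ** (X ** adj (G ** cmat B)))" by (rule finner_mult_l)
    also have "\<dots> = finner (cmat (blkA D)) (?U ** X ** ?W)" by (simp only: UC WB matrix_mul_assoc)
    finally show ?thesis by (simp add: Re_finner_cmat inner_commute)
  qed
  have t3: "Re (finner (cmat C ** G ** cmat (blkB D)) X) = inner (remat (?U ** X)) (blkB D)"
  proof -
    have "finner (cmat C ** G ** cmat (blkB D)) X = finner (cmat (blkB D)) (adj (cmat C ** G) ** X)"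
      by (simp only: finner_mult_l)
    then show ?thesis by (simp add: UC Re_finner_cmat inner_commute)
  qed
  show ?thesis unfolding lhs finner_add_l using t1 t2 t3 by simp
qed



lemma norm_mat1_mm: "mat 1 ** X = X" "X ** mat 1 = X" by simp_all

lemma norm_adj_cmatT: "norm (cmat (transpose C)) = norm C"
  by (metis adj_cmat norm_adj norm_cmat)

context Mop begin

lemma integrable_grad:
  fixes A :: "real^'n::finite^'n" and B :: "real^'m^'n" and C :: "real^'n^'r"
  assumes inv: "\<And>l. invertible (Xs A l)"
    and cb: "\<And>l. norm (matrix_inv (Xs A l)) * (1 + \<bar>l\<bar>) \<le> c"
  shows "integrable lborel (\<lambda>l. remat (Pfrak
          (vstack (adj (matrix_inv (Xs A l)) ** cmat (transpose C)) (mat 1)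
           ** M l (cmat C ** matrix_inv (Xs A l) ** cmat B)
           ** hstack (cmat (transpose B) ** adj (matrix_inv (Xs A l))) (mat 1))))"
proof -
  define G where "G l = matrix_inv (Xs A l)" for l
  define F where "F l = cmat C ** G l ** cmat B" for l
  define Phi :: "(complex^'n^'n) \<times> (complex^'m^'r) \<Rightarrow> real^('n+'m)^('n+'r)" where
    "Phi p = remat (Pfrak (vstack (adj (fst p) ** cmat (transpose C)) (mat 1) ** snd p
            ** hstack (cmat (transpose B) ** adj (fst p)) (mat 1)))" for p
  have Gc: "continuous_on UNIV G" unfolding G_def by (intro resolvent_cont inv)
  have Fc: "continuous_on UNIV F" unfolding F_def by (intro cont_mm continuous_on_const Gc)
  have Gm: "G \<in> borel_measurable lborel" by (rule meas_cont[OF Gc])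
  have Fm: "F \<in> borel_measurable lborel" by (rule meas_cont[OF Fc])
  have MFm: "(\<lambda>l. M l (F l)) \<in> borel_measurable lborel" by (rule M_meas_comp[OF Fm])
  have Phic: "continuous_on UNIV Phi" unfolding Phi_def
    by (intro cont_remat cont_Pfrak cont_mm cont_vstack cont_hstack cont_adj continuous_on_const
              continuous_on_fst continuous_on_snd continuous_on_id)
  have Phim: "Phi \<in> borel_measurable borel" by (rule borel_measurable_continuous_onI[OF Phic])
  have m: "(\<lambda>l. Phi (G l, M l (F l))) \<in> borel_measurable lborel"
    using measurable_compose[OF borel_measurable_Pair[OF Gm MFm] Phim] by simp
  have "norm (matrix_inv (Xs A 0)) \<le> c" using cb[of 0] by simp
  then have c0: "c \<ge> 0" by (rule order_trans[OF norm_ge_zero])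
  define u where "u = c * norm C"
  define w where "w = c * norm B"
  define x where "x = K * (norm C * c * norm B)"
  have u0: "u \<ge> 0" and w0: "w \<ge> 0" and x0: "x \<ge> 0" using c0 K0 by (simp_all add: u_def w_def x_def)
  have b: "norm (Phi (G l, M l (F l))) \<le> (u * x * w + u * x + x * w) * inverse (1 + l^2)" for l
  proof -
    let ?r = "inverse (1 + \<bar>l\<bar>)"
    have r0: "?r \<ge> 0" using r_pos[of l] by simp
    have r1: "?r \<le> 1" by (rule r_le1)
    have nG: "norm (G l) \<le> c * ?r" unfolding G_def by (rule G_le[OF cb])
    have nU: "norm (adj (G l) ** cmat (transpose C)) \<le> u * ?r"
    proof -
      have "norm (adj (G l) ** cmat (transpose C)) \<le> norm (G l) * norm C"
        using norm_mmult_le[of "adj (G l)" "cmat (transpose C)"] by (simp add: norm_adj norm_adj_cmatT)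
      also have "\<dots> \<le> c * ?r * norm C" by (intro mult_right_mono nG) simp
      finally show ?thesis by (simp add: u_def mult_ac)
    qed
    have nW: "norm (cmat (transpose B) ** adj (G l)) \<le> w * ?r"
    proof -
      have "norm (cmat (transpose B) ** adj (G l)) \<le> norm B * norm (G l)"
        using norm_mmult_le[of "cmat (transpose B)" "adj (G l)"] by (simp add: norm_adj norm_adj_cmatT)
      also have "\<dots> \<le> norm B * (c * ?r)" by (intro mult_left_mono nG) simp
      finally show ?thesis by (simp add: w_def mult_ac)
    qed
    have nX: "norm (M l (F l)) \<le> x * ?r"
    proof -
      have "norm (F l) \<le> norm C * norm (G l) * norm B" unfolding F_def by (rule norm_cmat_mm3)
      also have "\<dots> \<le> norm C * (c * ?r) * norm B" by (intro mult_right_mono mult_left_mono nG) simp_all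
      finally have "K * norm (F l) \<le> K * (norm C * (c * ?r) * norm B)" by (rule mult_left_mono) (rule K0)
      then have "norm (M l (F l)) \<le> K * (norm C * (c * ?r) * norm B)" using M_bdd[of l "F l"] by linarith
      then show ?thesis by (simp add: x_def mult_ac)
    qed
    let ?U = "adj (G l) ** cmat (transpose C)" and ?W = "cmat (transpose B) ** adj (G l)" and ?X = "M l (F l)"
    have eq: "Phi (G l, M l (F l)) = blk (remat (?U ** ?X ** ?W)) (remat (?U ** ?X)) (remat (?X ** ?W)) 0"
      unfolding Phi_def by (simp add: big_prod_blk Pfrak_blk remat_blk remat_zero)
    have "norm (Phi (G l, M l (F l))) \<le> norm (remat (?U ** ?X ** ?W)) + norm (remat (?U ** ?X)) + norm (remat (?X ** ?W)) + norm (0::real^'m^'r)"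
      unfolding eq by (rule norm_blk_le)
    also have "\<dots> \<le> norm (?U ** ?X ** ?W) + norm (?U ** ?X) + norm (?X ** ?W)"
      using norm_remat_le[of "?U ** ?X ** ?W"] norm_remat_le[of "?U ** ?X"] norm_remat_le[of "?X ** ?W"] by simp
    also have "\<dots> \<le> (u * ?r) * (x * ?r) * (w * ?r) + (u * ?r) * (x * ?r) + (x * ?r) * (w * ?r)"
    proof -
      have "norm (?U ** ?X) \<le> (u * ?r) * (x * ?r)"
        by (rule order_trans[OF norm_mmult_le], rule mult_mono[OF nU nX]) (simp_all add: u0 r0)
      moreover have "norm (?U ** ?X ** ?W) \<le> ((u * ?r) * (x * ?r)) * (w * ?r)"
        by (rule order_trans[OF norm_mmult_le], rule mult_mono[OF calculation nW]) (simp_all add: u0 x0 r0)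
      moreover have "norm (?X ** ?W) \<le> (x * ?r) * (w * ?r)"
        by (rule order_trans[OF norm_mmult_le], rule mult_mono[OF nX nW]) (simp_all add: x0 r0)
      ultimately show ?thesis by linarith
    qed
    also have "\<dots> = (u * x * w * ?r + u * x + x * w) * ?r^2" by (simp add: power2_eq_square algebra_simps)
    also have "\<dots> \<le> (u * x * w + u * x + x * w) * ?r^2"
    proof -
      have "u * x * w * ?r \<le> u * x * w" using r1 u0 x0 w0 by (simp add: mult_left_le)
      then show ?thesis by (intro mult_right_mono) simp_all
    qed
    also have "\<dots> \<le> (u * x * w + u * x + x * w) * inverse (1 + l^2)"
      by (intro mult_left_mono r_sq) (simp add: u0 x0 w0)
    finally show ?thesis .
  qed
  have "integrable lborel (\<lambda>l. Phi (G l, M l (F l)))" by (rule integrable_dom[OF m b])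
  then show ?thesis by (simp add: Phi_def G_def F_def)
qed

end



lemma DL_identity:
  fixes C dC :: "complex^'n^'r" and G Gp H dA :: "complex^'n^'n" and B dB :: "complex^'m^'n"
  assumes hG: "Gp = G + H" and hH: "H = Gp ** dA ** G"
  shows "(C + dC) ** Gp ** (B + dB) - C ** G ** B - (dC ** G ** B + C ** G ** dA ** G ** B + C ** G ** dB)
       = C ** H ** dA ** G ** B + C ** H ** dB + dC ** H ** (B + dB) + dC ** G ** dB"
proof -
  have H2: "H = G ** dA ** G + H ** dA ** G" using hH unfolding hG by (simp add: mm_add_r)
  have h2: "C ** H ** B = C ** G ** dA ** G ** B + C ** H ** dA ** G ** B"
    by (subst H2) (simp add: matrix_add_ldistrib mm_add_r matrix_mul_assoc)
  show ?thesis unfolding hG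
    by (simp add: matrix_add_ldistrib mm_add_r matrix_mul_assoc h2 algebra_simps)
qed



lemma nm_step: fixes a :: "complex^'n^'m" and b :: "complex^'k^'n"
  assumes "norm a \<le> x" "norm b \<le> y"
  shows "norm (a ** b) \<le> x * y"
  by (rule order_trans[OF norm_mmult_le], rule mult_mono[OF assms(1,2)]) (use assms in \<open>auto intro: order_trans[OF norm_ge_zero]\<close>)

definition Qc :: "real \<Rightarrow> real \<Rightarrow> real \<Rightarrow> real \<Rightarrow> real" where
  "Qc K c nb nc = (let bb = nb + 1; E = 2*c^3*nc*bb + 2*c^2*nc + 2*c^2*bb + c;
                       Lc = c*bb + c^2*nc*bb + c*nc; Fc = nc*c*bb in 2*E*K*Fc + K*(E+Lc)^2)"

context Mop begin

lemma q_bound: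
  fixes A dA :: "real^'n::finite^'n" and B dB :: "real^'m^'n" and C dC :: "real^'n^'r"
  assumes inv: "\<And>l. invertible (Xs A l)"
    and cb: "\<And>l. norm (matrix_inv (Xs A l)) * (1 + \<bar>l\<bar>) \<le> c"
    and tA: "norm dA \<le> t" and tB: "norm dB \<le> t" and tC: "norm dC \<le> t" and t1: "t \<le> 1"
    and small: "t * c \<le> 1/2"
  shows "\<bar>Re (finner (cmat (C + dC) ** matrix_inv (Xs (A + dA) l) ** cmat (B + dB))
                  (M l (cmat (C + dC) ** matrix_inv (Xs (A + dA) l) ** cmat (B + dB))))
        - Re (finner (cmat C ** matrix_inv (Xs A l) ** cmat B) (M l (cmat C ** matrix_inv (Xs A l) ** cmat B)))
        - 2 * Re (finner (cmat dC ** matrix_inv (Xs A l) ** cmat B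
               + cmat C ** matrix_inv (Xs A l) ** cmat dA ** matrix_inv (Xs A l) ** cmat B
               + cmat C ** matrix_inv (Xs A l) ** cmat dB) (M l (cmat C ** matrix_inv (Xs A l) ** cmat B)))\<bar>
       \<le> Qc K c (norm B) (norm C) * t^2 * inverse (1 + l^2)"
proof -
  have "norm (matrix_inv (Xs A 0)) \<le> c" using cb[of 0] by simp
  then have c0: "c \<ge> 0" by (rule order_trans[OF norm_ge_zero])
  have t0: "t \<ge> 0" using tA by (rule order_trans[OF norm_ge_zero])
  define r where "r = inverse (1 + \<bar>l\<bar>)"
  have r0: "r \<ge> 0" using r_pos[of l] by (simp add: r_def)
  have r1: "r \<le> 1" unfolding r_def by (rule r_le1)
  define bb where "bb = norm B + 1"
  define nc where "nc = norm C"
  define E where "E = 2*c^3*nc*bb + 2*c^2*nc + 2*c^2*bb + c"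
  define Lc where "Lc = c*bb + c^2*nc*bb + c*nc"
  define Fc where "Fc = nc*c*bb"
  have Q: "Qc K c (norm B) (norm C) = 2*E*K*Fc + K*(E+Lc)^2"
    unfolding Qc_def E_def Lc_def Fc_def bb_def nc_def Let_def by simp
  have nc0: "nc \<ge> 0" and bb0: "bb \<ge> 0" using nc_def bb_def by simp_all
  define G where "G = matrix_inv (Xs A l)"
  define Gp where "Gp = matrix_inv (Xs (A + dA) l)"
  have nG: "norm G \<le> c * r" unfolding G_def r_def by (rule G_le[OF cb])
  have nG1: "norm G \<le> c" using nG c0 r1 by (smt (verit) mult_left_le)
  have smallA: "norm dA * c \<le> 1/2" using tA c0 small by (smt (verit) mult_right_mono)
  have nGp: "norm Gp \<le> (2 * c) * r" unfolding Gp_def r_def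
    by (rule G_le[OF resolvent_pert(2)[OF inv cb smallA]])
  have hGp: "Gp = G + Gp ** cmat dA ** G" unfolding Gp_def G_def by (rule resolvent_pert(3)[OF inv cb smallA])
  define H where "H = Gp ** cmat dA ** G"
  have hG: "Gp = G + H" using hGp H_def by simp
  have ndA: "norm (cmat dA) \<le> t" and ndB: "norm (cmat dB) \<le> t" and ndC: "norm (cmat dC) \<le> t"
    using tA tB tC by (simp_all add: norm_cmat)
  have nB: "norm (cmat B) \<le> bb" and nC: "norm (cmat C) \<le> nc" by (simp_all add: norm_cmat bb_def nc_def)
  have nBp: "norm (cmat B + cmat dB) \<le> bb"
    using norm_triangle_ineq[of "cmat B" "cmat dB"] ndB t1 by (simp add: norm_cmat bb_def)
  have nH: "norm H \<le> (2 * c * r) * t * c" unfolding H_def by (intro nm_step nGp ndA nG1)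
  have nGr: "norm G \<le> c * r" by (rule nG)
  define F where "F = cmat C ** G ** cmat B"
  define L where "L = cmat dC ** G ** cmat B + cmat C ** G ** cmat dA ** G ** cmat B + cmat C ** G ** cmat dB"
  define F' where "F' = cmat (C + dC) ** Gp ** cmat (B + dB)"
  define D where "D = F' - F"
  have DL: "D - L = cmat C ** H ** cmat dA ** G ** cmat B + cmat C ** H ** cmat dB
                  + cmat dC ** H ** (cmat B + cmat dB) + cmat dC ** G ** cmat dB"
    unfolding D_def F'_def F_def L_def cmat_add
    by (rule DL_identity[OF hG H_def])
  have nDL: "norm (D - L) \<le> t^2 * r * E"
  proof -
    have a1: "norm (cmat C ** H ** cmat dA ** G ** cmat B) \<le> nc * ((2 * c * r) * t * c) * t * c * bb"
      by (intro nm_step nC nH ndA nG1 nB)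
    have a2: "norm (cmat C ** H ** cmat dB) \<le> nc * ((2 * c * r) * t * c) * t"
      by (intro nm_step nC nH ndB)
    have a3: "norm (cmat dC ** H ** (cmat B + cmat dB)) \<le> t * ((2 * c * r) * t * c) * bb"
      by (intro nm_step ndC nH nBp)
    have a4: "norm (cmat dC ** G ** cmat dB) \<le> t * (c * r) * t"
      by (intro nm_step ndC nGr ndB)
    have "norm (D - L) \<le> norm (cmat C ** H ** cmat dA ** G ** cmat B) + norm (cmat C ** H ** cmat dB)
            + norm (cmat dC ** H ** (cmat B + cmat dB)) + norm (cmat dC ** G ** cmat dB)"
      unfolding DL by (intro order_trans[OF norm_triangle_ineq] add_mono order_refl)
    also have "\<dots> \<le> nc * ((2 * c * r) * t * c) * t * c * bb + nc * ((2 * c * r) * t * c) * t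
            + t * ((2 * c * r) * t * c) * bb + t * (c * r) * t"
      using a1 a2 a3 a4 by linarith
    also have "\<dots> = t^2 * r * E" by (simp add: E_def power2_eq_square power3_eq_cube algebra_simps)
    finally show ?thesis .
  qed
  have nL: "norm L \<le> t * r * Lc"
  proof -
    have a1: "norm (cmat dC ** G ** cmat B) \<le> t * (c * r) * bb" by (intro nm_step ndC nGr nB)
    have a2: "norm (cmat C ** G ** cmat dA ** G ** cmat B) \<le> nc * (c * r) * t * c * bb"
      by (intro nm_step nC nGr ndA nG1 nB)
    have a3: "norm (cmat C ** G ** cmat dB) \<le> nc * (c * r) * t" by (intro nm_step nC nGr ndB)
    have "norm L \<le> norm (cmat dC ** G ** cmat B) + norm (cmat C ** G ** cmat dA ** G ** cmat B) + norm (cmat C ** G ** cmat dB)"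
      unfolding L_def by (intro order_trans[OF norm_triangle_ineq] add_mono order_refl)
    also have "\<dots> \<le> t * (c * r) * bb + nc * (c * r) * t * c * bb + nc * (c * r) * t"
      using a1 a2 a3 by linarith
    also have "\<dots> = t * r * Lc" by (simp add: Lc_def power2_eq_square algebra_simps)
    finally show ?thesis .
  qed
  have E0: "E \<ge> 0" unfolding E_def using c0 nc0 bb0 by simp
  have Lc0: "Lc \<ge> 0" unfolding Lc_def using c0 nc0 bb0 by simp
  have nD: "norm D \<le> t * r * (E + Lc)"
  proof -
    have "D = (D - L) + L" by simp
    then have "norm D \<le> norm (D - L) + norm L" by (metis norm_triangle_ineq)
    also have "\<dots> \<le> t^2 * r * E + t * r * Lc" using nDL nL by linarith
    also have "t^2 * r * E \<le> t * r * E"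
    proof -
      have "t^2 \<le> t" using t0 t1 by (simp add: power2_eq_square mult_left_le)
      then show ?thesis using r0 E0 by (intro mult_right_mono) simp_all
    qed
    finally show ?thesis by (simp add: algebra_simps)
  qed
  have nF: "norm F \<le> r * Fc"
  proof -
    have "norm F \<le> nc * (c * r) * bb" unfolding F_def by (intro nm_step nC nGr nB)
    then show ?thesis by (simp add: Fc_def mult_ac)
  qed
  have qid: "Re (finner F' (M l F')) - Re (finner F (M l F)) - 2 * Re (finner L (M l F))
           = 2 * Re (finner (D - L) (M l F)) + Re (finner D (M l D))"
  proof -
    have F'eq: "F' = F + D" unfolding D_def by simp
    have sym: "Re (finner F (M l D)) = Re (finner D (M l F))" by (rule Re_finner_M_sym)
    show ?thesis unfolding F'eq M_add finner_add_l finner_add_r finner_diff_l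
      using sym by simp
  qed
  have "\<bar>2 * Re (finner (D - L) (M l F)) + Re (finner D (M l D))\<bar>
        \<le> 2 * (norm (D - L) * (K * norm F)) + norm D * (K * norm D)"
  proof -
    have b1: "\<bar>Re (finner (D - L) (M l F))\<bar> \<le> norm (D - L) * (K * norm F)"
      by (rule order_trans[OF abs_Re_le_cmod], rule order_trans[OF norm_finner_le])
         (intro mult_left_mono M_bdd norm_ge_zero)
    have b2: "\<bar>Re (finner D (M l D))\<bar> \<le> norm D * (K * norm D)"
      by (rule order_trans[OF abs_Re_le_cmod], rule order_trans[OF norm_finner_le])
         (intro mult_left_mono M_bdd norm_ge_zero)
    show ?thesis using b1 b2 by linarith
  qed
  also have "\<dots> \<le> 2 * ((t^2 * r * E) * (K * (r * Fc))) + (t * r * (E + Lc)) * (K * (t * r * (E + Lc)))"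
  proof -
    have "norm (D - L) * (K * norm F) \<le> (t^2 * r * E) * (K * (r * Fc))"
      by (intro mult_mono nDL mult_left_mono nF K0) (use K0 t0 r0 E0 in simp_all)
    moreover have "norm D * (K * norm D) \<le> (t * r * (E + Lc)) * (K * (t * r * (E + Lc)))"
      by (intro mult_mono nD mult_left_mono K0) (use K0 t0 r0 E0 Lc0 in simp_all)
    ultimately show ?thesis by linarith
  qed
  also have "\<dots> = Qc K c (norm B) (norm C) * t^2 * r^2"
    unfolding Q by (simp add: power2_eq_square algebra_simps)
  also have "\<dots> \<le> Qc K c (norm B) (norm C) * t^2 * inverse (1 + l^2)"
  proof -
    have "Qc K c (norm B) (norm C) \<ge> 0" unfolding Q using E0 Lc0 K0 c0 nc0 bb0 by (simp add: Fc_def)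
    then show ?thesis unfolding r_def by (intro mult_left_mono r_sq) simp
  qed
  finally have fin: "\<bar>2 * Re (finner (D - L) (M l F)) + Re (finner D (M l D))\<bar>
      \<le> Qc K c (norm B) (norm C) * t^2 * inverse (1 + l^2)" .
  have "\<bar>Re (finner F' (M l F')) - Re (finner F (M l F)) - 2 * Re (finner L (M l F))\<bar>
      \<le> Qc K c (norm B) (norm C) * t^2 * inverse (1 + l^2)" unfolding qid by (rule fin)
  then show ?thesis by (simp only: F'_def F_def L_def G_def Gp_def)
qed

end




theorem lemma6p1:
  fixes M :: "real \<Rightarrow> complex^'m^'r \<Rightarrow> complex^'m^'r"
    and A :: "real^'n^'n" and B :: "real^'m^'n" and C :: "real^'n^'r"
  assumes M_add: "\<And>l X Y. M l (X + Y) = M l X + M l Y"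
    and M_scale: "\<And>l c X. M l (cscale c X) = cscale c (M l X)"
    and M_selfadj: "\<And>l X Y. finner X (M l Y) = finner (M l X) Y"
    and M_meas: "\<And>X. (\<lambda>l. M l X) \<in> borel_measurable lborel"
    and M_bdd: "\<exists>K. \<forall>l X. norm (M l X) \<le> K * norm X"
    and hurw: "hurwitz A"
  shows
    "integrable lborel (\<lambda>l. Re (finner (Ftf A B C (\<i> * complex_of_real l))
                                       (M l (Ftf A B C (\<i> * complex_of_real l)))))
     \<and> integrable lborel (\<lambda>l. remat (Pfrak
          (vstack (adj (Gtf A (\<i> * complex_of_real l)) ** cmat (transpose C)) (mat 1)
           ** M l (Ftf A B C (\<i> * complex_of_real l))
           ** hstack (cmat (transpose B) ** adj (Gtf A (\<i> * complex_of_real l))) (mat 1))))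
     \<and> (Vcost M has_derivative
          (\<lambda>H. inner ((1 / (2 * pi)) *\<^sub>R (LINT l|lborel. remat (Pfrak
             (vstack (adj (Gtf A (\<i> * complex_of_real l)) ** cmat (transpose C)) (mat 1)
              ** M l (Ftf A B C (\<i> * complex_of_real l))
              ** hstack (cmat (transpose B) ** adj (Gtf A (\<i> * complex_of_real l))) (mat 1))))) H))
        (at (blk A B C 0) within zeroBR)"
proof -
  obtain K1 where K1: "\<forall>l X. norm (M l X) \<le> K1 * norm X" using M_bdd by blast
  define K where "K = max K1 0"
  have Kb: "norm (M l X) \<le> K * norm X" for l X
  proof -
    have "K1 * norm X \<le> K * norm X" unfolding K_def by (intro mult_right_mono) simp_all
    then show ?thesis using K1 by (meson order_trans)
  qed
  have K0: "K \<ge> 0" unfolding K_def by simp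
  interpret Mop M K by (rule Mop.intro[OF M_add M_scale M_selfadj M_meas Kb K0])
  have inv: "\<And>l. invertible (Xs A l)" by (rule hurwitz_inv[OF hurw])
  obtain c where c0: "c > 0" and cb: "\<And>l. norm (matrix_inv (Xs A l)) * (1 + \<bar>l\<bar>) \<le> c"
    using resolvent_bound[OF inv] by blast
  have FtfX: "\<And>A' B' C' l. Ftf A' B' C' (\<i> * complex_of_real l) = cmat C' ** matrix_inv (Xs A' l) ** cmat B'"
    by (simp add: Ftf_def Gtf_Xs)
  define R where "R l = remat (Pfrak (vstack (adj (matrix_inv (Xs A l)) ** cmat (transpose C)) (mat 1)
      ** M l (cmat C ** matrix_inv (Xs A l) ** cmat B)
      ** hstack (cmat (transpose B) ** adj (matrix_inv (Xs A l))) (mat 1)))" for l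
  have intR: "integrable lborel R" unfolding R_def by (rule integrable_grad[OF inv cb])
  define f0 where "f0 l = Re (finner (cmat C ** matrix_inv (Xs A l) ** cmat B) (M l (cmat C ** matrix_inv (Xs A l) ** cmat B)))" for l
  have int0: "integrable lborel f0" unfolding f0_def by (rule integrable_quad[OF inv cb])
  define lin where "lin H = inner ((1 / (2 * pi)) *\<^sub>R (LINT l|lborel. R l)) H" for H
  define G0 where "G0 = blk A B C (0::real^'m^'r)"
  have deriv: "(Vcost M has_derivative lin) (at G0 within zeroBR)"
    unfolding has_derivative_within_alt
  proof (intro conjI allI impI)
    show "bounded_linear lin" unfolding lin_def by (rule bounded_linear_inner_right)
    fix e :: real assume e: "e > 0"
    define I0 where "I0 = integral\<^sup>L lborel (\<lambda>l::real. inverse (1 + l^2))"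
    have I00: "I0 \<ge> 0" unfolding I0_def by (rule Bochner_Integration.integral_nonneg) (simp add: add_pos_nonneg)
    define Q where "Q = Qc K c (norm B) (norm C)"
    define k where "k = \<bar>Q\<bar> * I0 / (4 * pi)"
    have k0: "k \<ge> 0" unfolding k_def using I00 by simp
    define d where "d = min (min 1 (1 / (2 * c))) (e / (k + 1))"
    have d0: "d > 0" unfolding d_def using c0 e k0 by simp
    show "\<exists>d>0. \<forall>y\<in>zeroBR. norm (y - G0) < d \<longrightarrow> norm (Vcost M y - Vcost M G0 - lin (y - G0)) \<le> e * norm (y - G0)"
    proof (intro exI[of _ d] conjI ballI impI d0)
      fix y :: "real^('n+'m)^('n+'r)" assume y: "y \<in> zeroBR" and yd: "norm (y - G0) < d"
      define Dl where "Dl = y - G0"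
      define t where "t = norm Dl"
      define dA where "dA = blkA Dl"
      define dB where "dB = blkB Dl"
      define dC where "dC = blkC Dl"
      have yA: "blkA y = A + dA" unfolding dA_def Dl_def G0_def blk_lin blk_parts by simp
      have yB: "blkB y = B + dB" unfolding dB_def Dl_def G0_def blk_lin blk_parts by simp
      have yC: "blkC y = C + dC" unfolding dC_def Dl_def G0_def blk_lin blk_parts by simp
      have tA: "norm dA \<le> t" unfolding dA_def t_def by (rule norm_blkA_le)
      have tB: "norm dB \<le> t" unfolding dB_def t_def by (rule norm_blkB_le)
      have tC: "norm dC \<le> t" unfolding dC_def t_def by (rule norm_blkC_le)
      have t0: "t \<ge> 0" unfolding t_def by simp
      have td: "t < d" using yd unfolding t_def Dl_def .
      have t1: "t \<le> 1" using td unfolding d_def by simp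
      have tc: "t * c \<le> 1/2"
      proof -
        have "t < 1 / (2 * c)" using td unfolding d_def by simp
        then show ?thesis using c0 by (simp add: field_simps)
      qed
      have tk: "t * k \<le> e"
      proof -
        have "t < e / (k + 1)" using td unfolding d_def by simp
        then have "t * (k + 1) < e" using k0 by (simp add: field_simps)
        moreover have "t * k \<le> t * (k + 1)" using t0 by (intro mult_left_mono) simp_all
        ultimately show ?thesis by linarith
      qed
      have smallA: "norm dA * c \<le> 1/2" using tA c0 tc by (smt (verit) mult_right_mono)
      have invy: "\<And>l. invertible (Xs (A + dA) l)" by (rule resolvent_pert(1)[OF inv cb smallA])
      have cby: "\<And>l. norm (matrix_inv (Xs (A + dA) l)) * (1 + \<bar>l\<bar>) \<le> 2 * c"
        by (rule resolvent_pert(2)[OF inv cb smallA])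
      define fy where "fy l = Re (finner (cmat (C + dC) ** matrix_inv (Xs (A + dA) l) ** cmat (B + dB))
                  (M l (cmat (C + dC) ** matrix_inv (Xs (A + dA) l) ** cmat (B + dB))))" for l
      have inty: "integrable lborel fy" unfolding fy_def by (rule integrable_quad[OF invy cby])
      define g where "g l = Re (finner (cmat dC ** matrix_inv (Xs A l) ** cmat B
               + cmat C ** matrix_inv (Xs A l) ** cmat dA ** matrix_inv (Xs A l) ** cmat B
               + cmat C ** matrix_inv (Xs A l) ** cmat dB) (M l (cmat C ** matrix_inv (Xs A l) ** cmat B)))" for l
      have gR: "inner (R l) Dl = g l" for l
        unfolding R_def g_def dA_def dB_def dC_def by (rule grad_identity)
      have intg: "integrable lborel g"
        using integrable_inner_left[OF intR, of Dl] unfolding gR .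
      have Vy: "Vcost M y = 1 / (4 * pi) * integral\<^sup>L lborel fy"
        unfolding Vcost_def fy_def FtfX yA yB yC ..
      have V0: "Vcost M G0 = 1 / (4 * pi) * integral\<^sup>L lborel f0"
        unfolding Vcost_def f0_def FtfX G0_def blk_parts ..
      have Lin: "lin Dl = 1 / (2 * pi) * integral\<^sup>L lborel g"
      proof -
        have "lin Dl = 1 / (2 * pi) * inner (LINT l|lborel. R l) Dl" unfolding lin_def by simp
        also have "inner (LINT l|lborel. R l) Dl = (LINT l|lborel. inner (R l) Dl)"
          by (rule integral_inner_left[symmetric]) (rule intR)
        finally show ?thesis unfolding gR .
      qed
      define q where "q l = fy l - f0 l - 2 * g l" for l
      have intq: "integrable lborel q" unfolding q_def using inty int0 intg by simp
      have eqV: "Vcost M y - Vcost M G0 - lin Dl = 1 / (4 * pi) * integral\<^sup>L lborel q"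
        unfolding Vy V0 Lin q_def using inty int0 intg by (simp add: field_simps)
      have qb: "\<bar>q l\<bar> \<le> Q * t^2 * inverse (1 + l^2)" for l
        unfolding q_def fy_def f0_def g_def Q_def by (rule q_bound[OF inv cb tA tB tC t1 tc])
      have inth: "integrable lborel (\<lambda>l. Q * t^2 * inverse (1 + l^2))"
        by (intro integrable_mult_right integrable_inv_sq)
      have iq: "\<bar>integral\<^sup>L lborel q\<bar> \<le> Q * t^2 * I0"
      proof -
        have "integral\<^sup>L lborel q \<le> integral\<^sup>L lborel (\<lambda>l. Q * t^2 * inverse (1 + l^2))"
          by (rule Bochner_Integration.integral_mono[OF intq inth]) (use qb in \<open>simp add: abs_le_iff\<close>)
        moreover have "- integral\<^sup>L lborel q \<le> integral\<^sup>L lborel (\<lambda>l. Q * t^2 * inverse (1 + l^2))"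
          unfolding integral_minus[symmetric]
          by (rule Bochner_Integration.integral_mono) (use intq inth qb in \<open>simp_all add: abs_le_iff\<close>)
        moreover have "integral\<^sup>L lborel (\<lambda>l. Q * t^2 * inverse (1 + l^2)) = Q * t^2 * I0"
          unfolding I0_def by simp
        ultimately show ?thesis by linarith
      qed
      have "norm (Vcost M y - Vcost M G0 - lin Dl) = 1 / (4 * pi) * \<bar>integral\<^sup>L lborel q\<bar>"
        unfolding eqV by (simp add: abs_mult)
      also have "\<dots> \<le> 1 / (4 * pi) * (Q * t^2 * I0)" by (intro mult_left_mono iq) simp
      also have "\<dots> \<le> k * t * t"
      proof -
        have "Q * t^2 * I0 \<le> \<bar>Q\<bar> * t^2 * I0" using I00 by (intro mult_right_mono) simp_all
        then show ?thesis unfolding k_def by (simp add: power2_eq_square field_simps)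
      qed
      also have "\<dots> \<le> e * t"
      proof -
        have "t * k * t \<le> e * t" by (rule mult_right_mono[OF tk t0])
        then show ?thesis by (simp add: mult_ac)
      qed
      finally show "norm (Vcost M y - Vcost M G0 - lin (y - G0)) \<le> e * norm (y - G0)"
        unfolding Dl_def[symmetric] t_def[symmetric] .
    qed
  qed
  have part1: "integrable lborel (\<lambda>l. Re (finner (Ftf A B C (\<i> * complex_of_real l))
                                       (M l (Ftf A B C (\<i> * complex_of_real l)))))"
    using int0 unfolding f0_def FtfX .
  have part2: "integrable lborel (\<lambda>l. remat (Pfrak
          (vstack (adj (Gtf A (\<i> * complex_of_real l)) ** cmat (transpose C)) (mat 1)
           ** M l (Ftf A B C (\<i> * complex_of_real l))
           ** hstack (cmat (transpose B) ** adj (Gtf A (\<i> * complex_of_real l))) (mat 1))))"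
    using intR unfolding R_def FtfX Gtf_Xs .
  have linq: "(\<lambda>H. inner ((1 / (2 * pi)) *\<^sub>R (LINT l|lborel. remat (Pfrak
             (vstack (adj (Gtf A (\<i> * complex_of_real l)) ** cmat (transpose C)) (mat 1)
              ** M l (Ftf A B C (\<i> * complex_of_real l))
              ** hstack (cmat (transpose B) ** adj (Gtf A (\<i> * complex_of_real l))) (mat 1))))) H) = lin"
    unfolding lin_def R_def FtfX Gtf_Xs ..
  show ?thesis using part1 part2 deriv unfolding linq G0_def by blast
qed


end
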